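(* Let $\mathcal{G}$ be a connected hypergraph with spectral radius $\rho$ and principal eigenvector $X=(x_v)$. Let $k\ge 3$ and let $e_0,e_1,e_2$ be edges of $\mathcal{G}$ with $e_0=\{v_1,v_2,\dots,v_{k-1},v_k\}$, such that $\deg_{\mathcal{G}}(v_2)=\cdots=\deg_{\mathcal{G}}(v_{k-1})=1$, $e_1\cap e_0=\{v_1\}$ and $e_2\cap e_0=\{v_k\}$. Then $$x_{v_2}=x_{v_3}=\cdots=x_{v_{k-1}}=\frac{x_{v_1}+x_{v_k}}{(k-1)\rho-(k-3)}<\min\{x_{v_1},x_{v_k}\}.$$
   Context: A hypergraph has a finite vertex set and distinct edges (subsets with at least two vertices); $\deg_{\mathcal{G}}(v)$ is the number of edges containing $v$. The adjacency matrix has $(\mathcal{A}_{\mathcal{G}})_{ij}=\sum_{e\ni i,j}\frac{1}{|e|-1}$ for $i\ne j$ and $0$ on the diagonal; $\rho$ is its spectral radius. For connected $\mathcal{G}$ the principal eigenvector is the unique positive eigenvector $X$ of $\mathcal{A}_{\mathcal{G}}$ for $\rho$ with $\sum_v x_v^2=1$. *)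

theory Defs
  imports Complex_Main
begin

definition hypergraph :: "'a set \<Rightarrow> 'a set set \<Rightarrow> bool" where
  "hypergraph V E \<longleftrightarrow> finite V \<and> (\<forall>e\<in>E. e \<subseteq> V \<and> card e \<ge> 2)"

definition hdeg :: "'a set set \<Rightarrow> 'a \<Rightarrow> nat" where
  "hdeg E v = card {e \<in> E. v \<in> e}"

definition hadj :: "'a set set \<Rightarrow> 'a \<Rightarrow> 'a \<Rightarrow> real" where
  "hadj E i j = (if i = j then 0
     else (\<Sum>e\<in>{e \<in> E. i \<in> e \<and> j \<in> e}. 1 / (real (card e) - 1)))"

definition hconnected :: "'a set \<Rightarrow> 'a set set \<Rightarrow> bool" where
  "hconnected V E \<longleftrightarrow> V \<noteq> {} \<and>
     (\<forall>u\<in>V. \<forall>w\<in>V. (\<lambda>a b. \<exists>e\<in>E. a \<in> e \<and> b \<in> e)\<^sup>*\<^sup>* u w)"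

definition hadj_eigenvalue :: "'a set \<Rightarrow> 'a set set \<Rightarrow> complex \<Rightarrow> bool" where
  "hadj_eigenvalue V E mu \<longleftrightarrow> (\<exists>x :: 'a \<Rightarrow> complex. (\<exists>v\<in>V. x v \<noteq> 0) \<and>
     (\<forall>i\<in>V. (\<Sum>j\<in>V. complex_of_real (hadj E i j) * x j) = mu * x i))"

definition hspectral_radius :: "'a set \<Rightarrow> 'a set set \<Rightarrow> real" where
  "hspectral_radius V E = Max {cmod mu | mu. hadj_eigenvalue V E mu}"

definition principal_eigenvector :: "'a set \<Rightarrow> 'a set set \<Rightarrow> ('a \<Rightarrow> real) \<Rightarrow> bool" where
  "principal_eigenvector V E X \<longleftrightarrow>
     (\<forall>v\<in>V. X v > 0) \<and> (\<Sum>v\<in>V. (X v)\<^sup>2) = 1 \<and>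
     (\<forall>i\<in>V. (\<Sum>j\<in>V. hadj E i j * X j) = hspectral_radius V E * X i)"

end

theory Submission
  imports Defs
begin

lemma eig_expand:
  assumes "finite V" "\<forall>e\<in>E. e \<subseteq> V" "u \<in> V"
  shows "(\<Sum>j\<in>V. hadj E u j * X j) = (\<Sum>e\<in>{e\<in>E. u\<in>e}. (\<Sum>j\<in>e-{u}. X j) / (real (card e) - 1))"
proof -
  have "finite E" using finite_subset[of E "Pow V"] assms by auto
  then have fE: "finite {e\<in>E. u\<in>e}" by simp
  have "(\<Sum>j\<in>V. hadj E u j * X j) = (\<Sum>j\<in>V-{u}. hadj E u j * X j)"
    using sum.remove[OF assms(1) assms(3), of "\<lambda>j. hadj E u j * X j"] by (simp add: hadj_def)
  also have "\<dots> = (\<Sum>j\<in>V-{u}. \<Sum>e\<in>{e\<in>E. u\<in>e}. (if j\<in>e then X j / (real (card e) - 1) else 0))"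
  proof (rule sum.cong[OF refl])
    fix j assume j: "j \<in> V-{u}"
    have "{x \<in> {e \<in> E. u \<in> e}. j \<in> x} = {e \<in> E. u \<in> e \<and> j \<in> e}" by auto
    moreover have "(\<Sum>e\<in>{e\<in>E. u\<in>e}. (if j\<in>e then X j / (real (card e) - 1) else 0)) = (\<Sum>e\<in>{x \<in> {e \<in> E. u \<in> e}. j \<in> x}. X j / (real (card e) - 1))"
      by (rule sum.inter_filter[OF fE, symmetric])
    ultimately show "hadj E u j * X j = (\<Sum>e\<in>{e\<in>E. u\<in>e}. (if j\<in>e then X j / (real (card e) - 1) else 0))"
      using j by (auto simp add: hadj_def sum_distrib_right)
  qed
  also have "\<dots> = (\<Sum>e\<in>{e\<in>E. u\<in>e}. \<Sum>j\<in>V-{u}. (if j\<in>e then X j / (real (card e) - 1) else 0))"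
    by (rule sum.swap)
  also have "\<dots> = (\<Sum>e\<in>{e\<in>E. u\<in>e}. (\<Sum>j\<in>e-{u}. X j) / (real (card e) - 1))"
  proof (rule sum.cong[OF refl])
    fix e assume e: "e \<in> {e\<in>E. u\<in>e}"
    have fV: "finite (V - {u})" using assms by auto
    have "{x \<in> V - {u}. x \<in> e} = e - {u}" using e assms(2) by auto
    then show "(\<Sum>j\<in>V-{u}. (if j\<in>e then X j / (real (card e) - 1) else 0)) = (\<Sum>j\<in>e-{u}. X j) / (real (card e) - 1)"
      by (simp add: sum.inter_filter[OF fV, symmetric] sum_divide_distrib)
  qed
  finally show ?thesis .
qed

theorem lemma3p6:
  fixes V :: "'a set" and E :: "'a set set" and X :: "'a \<Rightarrow> real"
    and k :: nat and v :: "nat \<Rightarrow> 'a" and e0 e1 e2 :: "'a set"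
  assumes "hypergraph V E" and "hconnected V E"
    and "principal_eigenvector V E X"
    and "k \<ge> 3"
    and "e0 \<in> E" and "e1 \<in> E" and "e2 \<in> E"
    and "inj_on v {1..k}" and "e0 = v ` {1..k}"
    and "\<forall>i\<in>{2..k-1}. hdeg E (v i) = 1"
    and "e1 \<inter> e0 = {v 1}" and "e2 \<inter> e0 = {v k}"
  shows "\<forall>i\<in>{2..k-1}. X (v i) = (X (v 1) + X (v k)) /
            ((real k - 1) * hspectral_radius V E - (real k - 3))
         \<and> (X (v 1) + X (v k)) / ((real k - 1) * hspectral_radius V E - (real k - 3))
            < min (X (v 1)) (X (v k))"
proof -
  define \<rho> where "\<rho> = hspectral_radius V E"
  define a where "a = (real k - 1) * \<rho>"
  define S where "S = sum X e0"
  define f where "f = (\<lambda>u e. (\<Sum>j\<in>e-{u}. X j) / (real (card e) - 1))"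
  have finV: "finite V" and sub: "\<forall>e\<in>E. e \<subseteq> V" and c2: "\<forall>e\<in>E. card e \<ge> 2"
    using assms(1) unfolding hypergraph_def by auto
  have finE: "finite E" using finite_subset[of E "Pow V"] sub finV by auto
  have pos: "\<forall>u\<in>V. X u > 0" and eig: "\<forall>u\<in>V. (\<Sum>j\<in>V. hadj E u j * X j) = \<rho> * X u"
    using assms(3) unfolding principal_eigenvector_def \<rho>_def by auto
  have eq: "\<rho> * X u = (\<Sum>e\<in>{e\<in>E. u\<in>e}. f u e)" if "u \<in> V" for u
    using eig eig_expand[OF finV sub that, of X] that unfolding f_def by auto
  have e0V: "e0 \<subseteq> V" using sub assms(5) by auto
  have finE0: "finite e0" using e0V finV finite_subset by auto
  have vV: "v i \<in> V" if "i \<in> {1..k}" for i using that e0V assms(9) by auto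
  have ce0: "card e0 = k" using assms(8,9) card_image by fastforce
  have k1: "real k - 1 > 0" using assms(4) by simp
  have fe0: "f u e0 = (S - X u) / (real k - 1)" if "u \<in> e0" for u
    unfolding f_def S_def using ce0 sum_diff1[OF finE0, of X u] that by simp
  have v1e0: "v 1 \<in> e0" and vke0: "v k \<in> e0" using assms(4,9) by auto
  have mid: "X (v i) * (a + 1) = S" and rpos: "\<rho> > 0" if i: "i \<in> {2..k-1}" for i
  proof -
    have ie: "v i \<in> e0" using i assms(9) by auto
    have "card {e\<in>E. v i \<in> e} = 1" using assms(10) i unfolding hdeg_def by auto
    then obtain e' where "{e\<in>E. v i \<in> e} = {e'}" by (meson card_1_singletonE)
    then have single: "{e\<in>E. v i \<in> e} = {e0}" using assms(5) ie by auto
    have viV: "v i \<in> V" using ie e0V by auto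
    have eqi: "\<rho> * X (v i) = (S - X (v i)) / (real k - 1)"
      using eq[OF viV] single fe0[OF ie] by simp
    have "v 1 \<noteq> v i" using assms(8) i assms(4) unfolding inj_on_def by (metis One_nat_def atLeastAtMost_iff diff_le_self le_trans nat_le_linear not_one_le_zero numeral_le_one_iff semiring_norm(69) Suc_1 Suc_n_not_le_n)
    then have "v 1 \<in> e0 - {v i}" using v1e0 by auto
    then have "(\<Sum>j\<in>e0-{v i}. X j) > 0"
      using e0V pos finE0 by (intro sum_pos) auto
    then have "S - X (v i) > 0" using sum_diff1[OF finE0, of X "v i"] ie unfolding S_def by simp
    then have "\<rho> * X (v i) > 0" using eqi k1 by simp
    then show "\<rho> > 0" using pos viV by (fastforce simp add: zero_less_mult_iff)
    show "X (v i) * (a + 1) = S" using eqi k1 unfolding a_def by (simp add: field_simps)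
  qed
  have r0: "\<rho> > 0" using rpos[of 2] assms(4) by auto
  have a1: "a + 1 > 0" using r0 k1 unfolding a_def by (smt (verit) mult_pos_pos)
  define y where "y = S / (a + 1)"
  have ymid: "X (v i) = y" if "i \<in> {2..k-1}" for i using mid[OF that] a1 unfolding y_def by (simp add: field_simps)
  have "S = (\<Sum>i\<in>{1..k}. X (v i))" unfolding S_def assms(9) using sum.reindex[OF assms(8)] by simp
  also have "{1..k} = insert 1 (insert k {2..k-1})" using assms(4) by auto
  also have "(\<Sum>i\<in>insert 1 (insert k {2..k-1}). X (v i)) = X (v 1) + X (v k) + (\<Sum>i\<in>{2..k-1}. X (v i))"
    using assms(4) by (simp add: sum.insert)
  also have "(\<Sum>i\<in>{2..k-1}. X (v i)) = (real k - 2) * y"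
    using ymid assms(4) by (simp add: of_nat_diff)
  finally have Sdec: "S = X (v 1) + X (v k) + (real k - 2) * y" .
  have ineq: "X u * (a + 1) > S" if u: "u \<in> e0" and e: "e \<in> E" and int: "e \<inter> e0 = {u}"
    and uu: "u = v 1 \<or> u = v k" for u e
  proof -
    have uV: "u \<in> V" using u e0V by auto
    have "v 2 \<in> e0" using assms(4,9) by auto
    moreover have "v 2 \<noteq> u"
    proof
      assume "v 2 = u"
      moreover have m: "(1::nat) \<in> {1..k}" "(2::nat) \<in> {1..k}" "k \<in> {1..k}" using assms(4) by auto
      moreover have "v 1 \<noteq> v 2" using inj_onD[OF assms(8) _ m(1) m(2)] by auto
      moreover have "v k \<noteq> v 2" using inj_onD[OF assms(8) _ m(3) m(2)] assms(4) by auto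
      ultimately show False using uu by auto
    qed
    ultimately have ne: "e \<noteq> e0" using int by auto
    have fnn: "f u e' \<ge> 0" if "e' \<in> E" for e'
      unfolding f_def using that c2 sub pos by (intro divide_nonneg_nonneg sum_nonneg) (auto simp: subset_iff less_imp_le)
    have ue: "u \<in> e" using int by auto
    have finEe: "finite e" using e sub finV finite_subset by blast
    have "card e \<ge> 2" using c2 e by blast
    then have "card (e - {u}) > 0" using ue finEe by (simp add: card_Diff_singleton)
    then have "e - {u} \<noteq> {}" by (metis card.empty less_irrefl)
    then have sp: "(\<Sum>j\<in>e-{u}. X j) > 0" using finEe sub e pos by (intro sum_pos) auto
    have "real (card e) - 1 > 0" using \<open>card e \<ge> 2\<close> by simp
    then have fpos: "f u e > 0" unfolding f_def using sp by simp
    have fin': "finite {e\<in>E. u\<in>e}" using finE by simp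
    have "(\<Sum>e\<in>{e0, e}. f u e) \<le> (\<Sum>e\<in>{e\<in>E. u\<in>e}. f u e)"
      by (rule sum_mono2[OF fin']) (use assms(5) e u ue fnn in auto)
    then have "f u e0 + f u e \<le> \<rho> * X u" using ne eq[OF uV] by simp
    then have "\<rho> * X u > (S - X u) / (real k - 1)" using fpos fe0[OF u] by simp
    then have "(real k - 1) * (\<rho> * X u) > S - X u" using k1 by (simp add: field_simps)
    then show ?thesis unfolding a_def by (simp add: algebra_simps)
  qed
  have v1e1: "v 1 \<in> e0" using v1e0 .
  have x1: "X (v 1) > y" using ineq[OF v1e0 assms(6) assms(11)] a1 unfolding y_def by (simp add: field_simps)
  have xk: "X (v k) > y" using ineq[OF vke0 assms(7) assms(12)] a1 unfolding y_def by (simp add: field_simps)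
  have "y * (a + 1) = S" unfolding y_def using a1 by simp
  then have Dy: "(a - (real k - 3)) * y = X (v 1) + X (v k)" using Sdec by (simp add: algebra_simps)
  have "X (v 1) > 0" "X (v k) > 0" using pos vV assms(4) by auto
  then have "a - (real k - 3) \<noteq> 0" using Dy by auto
  then have yD: "y = (X (v 1) + X (v k)) / (a - (real k - 3))" using Dy by (simp add: field_simps)
  show ?thesis using ymid x1 xk yD unfolding a_def \<rho>_def by auto
qed

end
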